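(* Consider a FIFO system in which packets, numbered $1,2,\dots$ in order of arrival, with sizes $l_k$, arrive at times $A_1\le A_2\le\cdots$ and packet $n$ starts its service at time $Q_n$, service being non-preemptive and in order. If the system offers a service curve $\beta$, then for each packet $n$ there exists $m\le n$ such that $$\beta(Q_n-A_m)\le\sum_{k=m}^{n-1}l_k.$$
   Context: $N(t)$ denotes the number of bits that have arrived up to time $t$ and $O(t)$ the number of bits served up to time $t$ (so that just after $Q_n$ the output equals $l_1+\dots+l_{n-1}$). A function $\beta:[0,\infty)\to[0,\infty)$, wide-sense increasing, is a service curve for the system if for every $t$ there exists $s\le t$ with $O(t)\ge N(s)+\beta(t-s)$. An empty sum equals $0$. *)

theory Defs
  imports Complex_Main
begin

definition arrivals :: "(nat \<Rightarrow> real) \<Rightarrow> (nat \<Rightarrow> real) \<Rightarrow> real \<Rightarrow> real" where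
  "arrivals A l t = (\<Sum>k\<in>{k. 1 \<le> k \<and> A k \<le> t}. l k)"

definition service_curve :: "(real \<Rightarrow> real) \<Rightarrow> (real \<Rightarrow> real) \<Rightarrow> (real \<Rightarrow> real) \<Rightarrow> bool" where
  "service_curve N Out \<beta> \<longleftrightarrow>
     (\<forall>t\<ge>0. \<exists>s. 0 \<le> s \<and> s \<le> t \<and> Out t \<ge> N s + \<beta> (t - s))"

end

theory Submission
  imports Defs
begin

theorem lemma2:
  fixes A Q l :: "nat \<Rightarrow> real" and Out \<beta> :: "real \<Rightarrow> real" and n :: nat
  assumes A_nonneg: "\<And>k. 1 \<le> k \<Longrightarrow> 0 \<le> A k"
    and A_mono: "\<And>j k. 1 \<le> j \<Longrightarrow> j \<le> k \<Longrightarrow> A j \<le> A k"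
    and l_pos: "\<And>k. 1 \<le> k \<Longrightarrow> 0 < l k"
    and finite_arr: "\<And>t. finite {k. 1 \<le> k \<and> A k \<le> t}"
    and Q_after_A: "\<And>k. 1 \<le> k \<Longrightarrow> A k \<le> Q k"
    and Q_mono: "\<And>j k. 1 \<le> j \<Longrightarrow> j \<le> k \<Longrightarrow> Q j \<le> Q k"
    and O_mono: "mono Out"
    and O_at_Q: "\<And>k. 1 \<le> k \<Longrightarrow> Out (Q k) = (\<Sum>i=1..<k. l i)"
    and beta_mono: "mono_on {0..} \<beta>"
    and beta_nonneg: "\<And>x. 0 \<le> x \<Longrightarrow> 0 \<le> \<beta> x"
    and sc: "service_curve (arrivals A l) Out \<beta>"
    and n: "1 \<le> n"
  shows "\<exists>m. 1 \<le> m \<and> m \<le> n \<and> \<beta> (Q n - A m) \<le> (\<Sum>k=m..<n. l k)"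
proof -
  let ?S = "\<lambda>s. {k. 1 \<le> k \<and> A k \<le> s}"
  have lnn: "\<And>k. k \<in> ?S s \<Longrightarrow> 0 \<le> l k" for s using l_pos by (simp add: less_imp_le)
  have t0: "0 \<le> Q n" using A_nonneg[OF n] Q_after_A[OF n] by linarith
  obtain s where s0: "0 \<le> s" and sQ: "s \<le> Q n"
    and ineq: "Out (Q n) \<ge> arrivals A l s + \<beta> (Q n - s)"
    using sc t0 unfolding service_curve_def by blast
  have Oq: "Out (Q n) = (\<Sum>i=1..<n. l i)" using O_at_Q[OF n] .
  have bnn: "0 \<le> \<beta> (Q n - s)" using beta_nonneg sQ by simp
  show ?thesis
  proof (cases "A n \<le> s")
    case True
    have sub: "{1..n} \<subseteq> ?S s" using A_mono True by (auto intro: order_trans[OF A_mono])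
    have "(\<Sum>i=1..n. l i) \<le> arrivals A l s"
      unfolding arrivals_def by (rule sum_mono2[OF finite_arr sub]) (auto simp: less_imp_le l_pos)
    moreover have "(\<Sum>i=1..n. l i) = (\<Sum>i=1..<n. l i) + l n"
      using n by (simp add: atLeastLessThanSuc_atLeastAtMost[symmetric])
    ultimately show ?thesis using ineq Oq bnn l_pos[OF n] by linarith
  next
    case False
    define m where "m = (LEAST k. 1 \<le> k \<and> s < A k)"
    have ex: "1 \<le> n \<and> s < A n" using n False by simp
    have m1: "1 \<le> m" and mA: "s < A m" using LeastI[of "\<lambda>k. 1 \<le> k \<and> s < A k", OF ex] m_def by auto
    have mn: "m \<le> n" using Least_le[of "\<lambda>k. 1 \<le> k \<and> s < A k", OF ex] m_def by simp
    have below: "A k \<le> s" if "1 \<le> k" "k < m" for k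
      using not_less_Least[of k "\<lambda>k. 1 \<le> k \<and> s < A k"] that m_def by force
    have sub: "{1..<m} \<subseteq> ?S s" using below by auto
    have "(\<Sum>i=1..<m. l i) \<le> arrivals A l s"
      unfolding arrivals_def by (rule sum_mono2[OF finite_arr sub]) (auto simp: less_imp_le l_pos)
    moreover have "(\<Sum>i=1..<n. l i) = (\<Sum>i=1..<m. l i) + (\<Sum>i=m..<n. l i)"
      using m1 mn by (simp add: sum.atLeastLessThan_concat)
    moreover have "\<beta> (Q n - A m) \<le> \<beta> (Q n - s)"
    proof (rule mono_onD[OF beta_mono])
      show "Q n - A m \<in> {0..}" using A_mono[OF m1 mn] Q_after_A[OF n] by simp
      show "Q n - s \<in> {0..}" using sQ by simp
      show "Q n - A m \<le> Q n - s" using mA by simp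
    qed
    ultimately show ?thesis using ineq Oq m1 mn by (intro exI[of _ m]) linarith
  qed
qed

end
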